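(* For any $\alpha\ge1$, $\gamma>1$ and $\varepsilon>0$ there exists an instance and an outcome in it which satisfies $\alpha$-proportional fairness but is not in the $\left(\gamma,\frac{\gamma\alpha+1}{\gamma-1}-\varepsilon\right)$-transferable core.
   Context: Let $(\mathcal X,d)$ be a metric space, $N=[n]$ a set of agents and $C$ a set of candidates located in $\mathcal X$, $k\in\mathbb N^+$; an outcome is $W\subseteq C$ with $|W|\le k$; $d(i,W)=\min_{c\in W}d(i,c)$. $\alpha$-proportional fairness: there is no group $N'\subseteq N$ with $|N'|\ge n/k$ and candidate $c\in C\setminus W$ such that $\alpha\, d(i,c)<d(i,W)$ for all $i\in N'$. $(\gamma,\alpha)$-transferable core: $W$ is in it if there is no group $N'\subseteq N$ and candidate $c\in C\setminus W$ with $|N'|\ge\gamma n/k$ and $\alpha\sum_{i\in N'}d(i,c)<\sum_{i\in N'}d(i,W)$. *)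

theory Defs
  imports Complex_Main
begin

text \<open>An instance: a metric space given by a carrier X of points (type nat) with a
  distance function d; agents 0..n-1 located at points xa i; a finite set C of
  candidate indices, candidate c located at point xc c; a committee size k.\<close>

definition metric_on :: "nat set \<Rightarrow> (nat \<Rightarrow> nat \<Rightarrow> real) \<Rightarrow> bool" where
  "metric_on X d \<longleftrightarrow>
     (\<forall>x\<in>X. \<forall>y\<in>X. d x y \<ge> 0 \<and> (d x y = 0 \<longleftrightarrow> x = y) \<and> d x y = d y x) \<and>
     (\<forall>x\<in>X. \<forall>y\<in>X. \<forall>z\<in>X. d x z \<le> d x y + d y z)"

definition is_instance :: "nat set \<Rightarrow> (nat \<Rightarrow> nat \<Rightarrow> real) \<Rightarrow> nat \<Rightarrow> (nat \<Rightarrow> nat)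
    \<Rightarrow> nat set \<Rightarrow> (nat \<Rightarrow> nat) \<Rightarrow> nat \<Rightarrow> bool" where
  "is_instance X d n xa C xc k \<longleftrightarrow>
     metric_on X d \<and> n \<ge> 1 \<and> k \<ge> 1 \<and> finite C \<and> C \<noteq> {} \<and>
     (\<forall>i<n. xa i \<in> X) \<and> (\<forall>c\<in>C. xc c \<in> X)"

definition dist_ac :: "(nat \<Rightarrow> nat \<Rightarrow> real) \<Rightarrow> (nat \<Rightarrow> nat) \<Rightarrow> (nat \<Rightarrow> nat) \<Rightarrow> nat \<Rightarrow> nat \<Rightarrow> real" where
  "dist_ac d xa xc i c = d (xa i) (xc c)"

definition dist_set :: "(nat \<Rightarrow> nat \<Rightarrow> real) \<Rightarrow> (nat \<Rightarrow> nat) \<Rightarrow> (nat \<Rightarrow> nat) \<Rightarrow> nat \<Rightarrow> nat set \<Rightarrow> real" where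
  "dist_set d xa xc i W = Min ((\<lambda>c. dist_ac d xa xc i c) ` W)"

definition outcome :: "nat set \<Rightarrow> nat \<Rightarrow> nat set \<Rightarrow> bool" where
  "outcome C k W \<longleftrightarrow> W \<subseteq> C \<and> card W \<le> k"

definition prop_fair :: "real \<Rightarrow> (nat \<Rightarrow> nat \<Rightarrow> real) \<Rightarrow> nat \<Rightarrow> (nat \<Rightarrow> nat)
    \<Rightarrow> nat set \<Rightarrow> (nat \<Rightarrow> nat) \<Rightarrow> nat \<Rightarrow> nat set \<Rightarrow> bool" where
  "prop_fair \<alpha> d n xa C xc k W \<longleftrightarrow>
     \<not> (\<exists>N'. N' \<subseteq> {..<n} \<and> real (card N') \<ge> real n / real k \<and>
          (\<exists>c\<in>C - W. \<forall>i\<in>N'. \<alpha> * dist_ac d xa xc i c < dist_set d xa xc i W))"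

definition transferable_core :: "real \<Rightarrow> real \<Rightarrow> (nat \<Rightarrow> nat \<Rightarrow> real) \<Rightarrow> nat \<Rightarrow> (nat \<Rightarrow> nat)
    \<Rightarrow> nat set \<Rightarrow> (nat \<Rightarrow> nat) \<Rightarrow> nat \<Rightarrow> nat set \<Rightarrow> bool" where
  "transferable_core \<gamma> \<alpha> d n xa C xc k W \<longleftrightarrow>
     \<not> (\<exists>N'. N' \<subseteq> {..<n} \<and> real (card N') \<ge> \<gamma> * real n / real k \<and>
          (\<exists>c\<in>C - W. \<alpha> * (\<Sum>i\<in>N'. dist_ac d xa xc i c) < (\<Sum>i\<in>N'. dist_set d xa xc i W)))"

end

theory Submission
  imports Defs
begin

definition dd :: "real \<Rightarrow> nat \<Rightarrow> nat \<Rightarrow> real" where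
  "dd \<alpha> x y = (if x = y then 0 else if (x = 1 \<and> y = 2) \<or> (x = 2 \<and> y = 1) then 1
     else if (x = 0 \<and> y = 2) \<or> (x = 2 \<and> y = 0) then \<alpha> else 1 + \<alpha>)"

lemma dd_metric: "\<alpha> \<ge> 1 \<Longrightarrow> metric_on {0,1,2} (dd \<alpha>)"
  unfolding metric_on_def dd_def by auto

lemma sum_split_if:
  "(\<Sum>i<a+b. (if i < a then (A::real) else B)) = real a * A + real b * B"
  by (induction b) (auto simp: algebra_simps)

theorem theorem4:
  fixes \<alpha> \<gamma> \<epsilon> :: real
  assumes "\<alpha> \<ge> 1" and "\<gamma> > 1" and "\<epsilon> > 0"
  shows "\<exists>X d n xa C xc k W.
           is_instance X d n xa C xc k \<and> outcome C k W \<and> W \<noteq> {} \<and>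
           prop_fair \<alpha> d n xa C xc k W \<and>
           \<not> transferable_core \<gamma> ((\<gamma> * \<alpha> + 1) / (\<gamma> - 1) - \<epsilon>) d n xa C xc k W"
proof -
  define L where "L = (1 + \<alpha>) / (\<gamma> - 1)"
  define m :: nat where "m = nat \<lceil>L * (\<gamma> + 1) / (\<epsilon> * (\<gamma> - 1))\<rceil> + 1"
  define b :: nat where "b = nat \<lceil>(\<gamma> - 1) * (real m + 1)\<rceil> + 1"
  define K :: nat where "K = nat \<lceil>\<gamma>\<rceil> + 1"
  define n where "n = K * (m + 1)"
  define loc :: "nat \<Rightarrow> nat" where "loc i = (if i < m then 1 else if i < m + b then 2 else 0)" for i
  define \<beta> where "\<beta> = (\<gamma> * \<alpha> + 1) / (\<gamma> - 1) - \<epsilon>"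
  have g1: "\<gamma> - 1 > 0" using assms by simp
  have Lpos: "L > 0" unfolding L_def using assms by simp
  have m1: "m \<ge> 1" unfolding m_def by simp
  have mbound: "real m \<ge> L * (\<gamma> + 1) / (\<epsilon> * (\<gamma> - 1))"
    unfolding m_def by linarith
  hence mb2: "\<epsilon> * (\<gamma> - 1) * real m \<ge> L * (\<gamma> + 1)"
    using assms g1 by (simp add: field_simps)
  have blo: "real b \<ge> (\<gamma> - 1) * (real m + 1) + 1" unfolding b_def by linarith
  have bhi: "real b \<le> (\<gamma> - 1) * (real m + 1) + 2" unfolding b_def
    using g1 by (simp add: of_nat_nat) linarith
  have Kge: "real K \<ge> \<gamma> + 1" unfolding K_def by linarith
  have K1: "K \<ge> 1" unfolding K_def by simp
  have nk: "real n / real K = real m + 1" unfolding n_def using K1 by (simp add: field_simps)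
  have mbn: "m + b \<le> n"
  proof -
    have "real (m + b) \<le> \<gamma> * (real m + 1) + 1" using bhi by (simp add: algebra_simps)
    also have "\<dots> \<le> (\<gamma> + 1) * (real m + 1)" by (simp add: algebra_simps)
    also have "\<dots> \<le> real K * (real m + 1)" using Kge by (intro mult_right_mono) auto
    also have "\<dots> = real (K * (m + 1))" by (simp add: algebra_simps)
    finally have "real (m + b) \<le> real (K * (m + 1))" .
    then show ?thesis unfolding n_def by (simp only: of_nat_le_iff)
  qed
  have beq: "\<beta> = \<alpha> + L - \<epsilon>" unfolding \<beta>_def L_def using g1 by (simp add: field_simps)
  have key: "\<beta> * real b < real m * (1 + \<alpha>) + real b * \<alpha>"
  proof (cases "L - \<epsilon> \<le> 0")
    case True
    have "(L - \<epsilon>) * real b \<le> 0" using True by (simp add: mult_nonpos_nonneg)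
    moreover have "real m * (1 + \<alpha>) > 0" using m1 assms by simp
    ultimately show ?thesis unfolding beq by (simp add: algebra_simps)
  next
    case False
    have "(L - \<epsilon>) * real b \<le> (L - \<epsilon>) * ((\<gamma> - 1) * (real m + 1) + 2)"
      using False bhi by (intro mult_left_mono) auto
    also have "\<dots> = (\<gamma> - 1) * L * real m + ((\<gamma> + 1) * L - \<epsilon> * (\<gamma> - 1) * real m - \<epsilon> * (\<gamma> - 1) - 2 * \<epsilon>)"
      by (simp add: algebra_simps)
    also have "\<dots> < (\<gamma> - 1) * L * real m" proof -
      have "\<epsilon> * (\<gamma> - 1) > 0" using assms g1 by simp
      moreover have "(\<gamma> + 1) * L = L * (\<gamma> + 1)" by simp
      ultimately show ?thesis using mb2 assms by linarith
    qed
    also have "(\<gamma> - 1) * L = 1 + \<alpha>" unfolding L_def using g1 by simp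
    finally have "(L - \<epsilon>) * real b < (1 + \<alpha>) * real m" .
    then show ?thesis unfolding beq by (simp add: algebra_simps)
  qed
  have inst: "is_instance {0,1,2} (dd \<alpha>) n loc {0,1} id K"
    unfolding is_instance_def using dd_metric[OF assms(1)] K1
    by (auto simp: n_def loc_def)
  have outc: "outcome {0,1} K {0}" unfolding outcome_def using K1 by simp
  have ds: "dist_set (dd \<alpha>) loc id i {0} = dd \<alpha> (loc i) 0" for i
    unfolding dist_set_def dist_ac_def by simp
  have pf: "prop_fair \<alpha> (dd \<alpha>) n loc {0,1} id K {0}"
    unfolding prop_fair_def
  proof
    assume "\<exists>N'. N' \<subseteq> {..<n} \<and> real n / real K \<le> real (card N') \<and>
        (\<exists>c\<in>{0, 1} - {0}. \<forall>i\<in>N'. \<alpha> * dist_ac (dd \<alpha>) loc id i c < dist_set (dd \<alpha>) loc id i {0})"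
    then obtain N' where c: "real m + 1 \<le> real (card N')"
      and h: "\<forall>i\<in>N'. \<alpha> * dd \<alpha> (loc i) 1 < dd \<alpha> (loc i) 0"
      using nk ds unfolding dist_ac_def by auto
    have "N' \<subseteq> {..<m}"
    proof
      fix i assume "i \<in> N'"
      with h have "\<alpha> * dd \<alpha> (loc i) 1 < dd \<alpha> (loc i) 0" by auto
      have nn: "\<not> \<alpha> * (1 + \<alpha>) < 0" using assms(1) by (simp add: not_less zero_le_mult_iff)
      show "i \<in> {..<m}"
      proof (rule ccontr)
        assume "i \<notin> {..<m}"
        hence "loc i = 2 \<or> loc i = 0" by (auto simp: loc_def)
        then show False
        proof
          assume "loc i = 2" then show False using \<open>\<alpha> * dd \<alpha> (loc i) 1 < dd \<alpha> (loc i) 0\<close>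
            by (simp add: dd_def)
        next
          assume "loc i = 0" then show False using \<open>\<alpha> * dd \<alpha> (loc i) 1 < dd \<alpha> (loc i) 0\<close> nn
            by (simp add: dd_def)
        qed
      qed
    qed
    hence "card N' \<le> m" by (metis card_lessThan card_mono finite_lessThan)
    with c show False by linarith
  qed
  have ntc: "\<not> transferable_core \<gamma> \<beta> (dd \<alpha>) n loc {0,1} id K {0}"
    unfolding transferable_core_def not_not
  proof (intro exI conjI bexI)
    show "{..<m+b} \<subseteq> {..<n}" using mbn by auto
    show "\<gamma> * real n / real K \<le> real (card {..<m+b})"
      using nk blo by (simp add: algebra_simps times_divide_eq_right[symmetric])
    show "(1::nat) \<in> {0,1} - {0}" by simp
    have s1: "(\<Sum>i<m+b. dist_ac (dd \<alpha>) loc id i 1) = real m * 0 + real b * 1"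
      unfolding sum_split_if[symmetric] dist_ac_def
      by (rule sum.cong) (auto simp: loc_def dd_def)
    have s2: "(\<Sum>i<m+b. dist_set (dd \<alpha>) loc id i {0}) = real m * (1 + \<alpha>) + real b * \<alpha>"
      unfolding sum_split_if[symmetric] ds
      by (rule sum.cong) (auto simp: loc_def dd_def)
    show "\<beta> * (\<Sum>i<m+b. dist_ac (dd \<alpha>) loc id i 1) < (\<Sum>i<m+b. dist_set (dd \<alpha>) loc id i {0})"
      unfolding s1 s2 using key by simp
  qed
  show ?thesis using inst outc pf ntc unfolding \<beta>_def by blast
qed

end
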